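(* Let $f:B_E \to\mathbb C$ be an analytic function and $x\in B_E$. Then $$\|\widetilde \nabla f(x)\| = \sup_{w\in E,\ w\ne 0} \frac{|\langle \nabla f(x), \overline{w}\rangle|\, (1 -\|x\|^2)}{\sqrt{(1 - \|x\|^2) \|w\|^2 + |\langle w,x \rangle|^2}}.$$
   Context: $E$ is a complex Hilbert space of arbitrary dimension with inner product $\langle\cdot,\cdot\rangle$ (linear in the first variable) and open unit ball $B_E$; fix an orthonormal basis $(e_k)$ and set $\overline{z}=\sum_k\overline{z_k}e_k$ for $z=\sum_kz_ke_k$. For analytic $g:B_E\to\mathbb C$, $\nabla g(x)\in E$ is defined by $g'(x)(y)=\langle y,\overline{\nabla g(x)}\rangle$. For $a\in B_E$, $\varphi_a(y)=(s_aQ_a+P_a)\big(\frac{a-y}{1-\langle y,a\rangle}\big)$ with $s_a=\sqrt{1-\|a\|^2}$, $P_a$ the orthogonal projection onto $\mathbb Ca$, $Q_a=I-P_a$ ($\varphi_0(y)=-y$). The invariant gradient is $\widetilde\nabla f(x)=\nabla(f\circ\varphi_x)(0)$. *)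

theory Defs
  imports "HOL-Analysis.Analysis"
begin

text \<open>Complex Hilbert spaces (the distribution has no complex vector space class):
  a real Banach space with a compatible complex scalar multiplication and a complex
  inner product, linear in the first variable, inducing the norm.\<close>

class chilbert_space = real_normed_vector + complete_space +
  fixes scaleC :: "complex \<Rightarrow> 'a \<Rightarrow> 'a" (infixr \<open>*\<^sub>C\<close> 75)
    and cinner :: "'a \<Rightarrow> 'a \<Rightarrow> complex"
  assumes scaleC_add_right: "a *\<^sub>C (x + y) = a *\<^sub>C x + a *\<^sub>C y"
    and scaleC_add_left: "(a + b) *\<^sub>C x = a *\<^sub>C x + b *\<^sub>C x"
    and scaleC_scaleC: "a *\<^sub>C (b *\<^sub>C x) = (a * b) *\<^sub>C x"
    and scaleC_one: "1 *\<^sub>C x = x"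
    and scaleR_scaleC: "r *\<^sub>R x = complex_of_real r *\<^sub>C x"
    and cinner_add_left: "cinner (x + y) z = cinner x z + cinner y z"
    and cinner_scaleC_left: "cinner (c *\<^sub>C x) y = c * cinner x y"
    and cinner_commute: "cinner x y = cnj (cinner y x)"
    and cinner_eq_zero_iff: "cinner x x = 0 \<longleftrightarrow> x = 0"
    and norm_eq_sqrt_cinner: "norm x = sqrt (Re (cinner x x))"

definition orthonormal_basis :: "'a::chilbert_space set \<Rightarrow> bool" where
  "orthonormal_basis B \<longleftrightarrow>
     (\<forall>e\<in>B. \<forall>e'\<in>B. cinner e e' = (if e = e' then 1 else 0)) \<and>
     (\<forall>z. (\<forall>e\<in>B. cinner z e = 0) \<longrightarrow> z = 0)"

definition cconj :: "'a::chilbert_space set \<Rightarrow> 'a \<Rightarrow> 'a" where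
  "cconj B z = infsum (\<lambda>e. cnj (cinner z e) *\<^sub>C e) B"

definition hol_grad :: "'a::chilbert_space set \<Rightarrow> ('a \<Rightarrow> complex) \<Rightarrow> 'a \<Rightarrow> 'a" where
  "hol_grad B g x = (THE v. \<forall>y. frechet_derivative g (at x) y = cinner y (cconj B v))"

text \<open>Orthogonal projection onto the complex line through a (0 if a = 0).\<close>
definition cproj :: "'a::chilbert_space \<Rightarrow> 'a \<Rightarrow> 'a" where
  "cproj a y = (cinner y a / cinner a a) *\<^sub>C a"

text \<open>Moebius automorphism phi_a of the unit ball; phi_0 y = - y.\<close>
definition moebius :: "'a::chilbert_space \<Rightarrow> 'a \<Rightarrow> 'a" where
  "moebius a y = (let u = (1 / (1 - cinner y a)) *\<^sub>C (a - y)
     in complex_of_real (sqrt (1 - (norm a)\<^sup>2)) *\<^sub>C (u - cproj a u) + cproj a u)"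

definition inv_grad :: "'a::chilbert_space set \<Rightarrow> ('a \<Rightarrow> complex) \<Rightarrow> 'a \<Rightarrow> 'a" where
  "inv_grad B f x = hol_grad B (f \<circ> moebius x) 0"

definition analytic_on_ball :: "('a::chilbert_space \<Rightarrow> complex) \<Rightarrow> bool" where
  "analytic_on_ball f \<longleftrightarrow> (\<forall>x. norm x < 1 \<longrightarrow>
     (\<exists>D. (f has_derivative D) (at x) \<and> (\<forall>c y. D (c *\<^sub>C y) = c * D y)))"

end

theory Submission
  imports Defs
begin



lemma scaleC_zero_left [simp]: "0 *\<^sub>C x = 0"
proof -
  have "0 *\<^sub>C x = 0 *\<^sub>C x + 0 *\<^sub>C x" using scaleC_add_left[of 0 0 x] by simp
  then show ?thesis by simp
qed

lemma scaleC_zero_right [simp]: "a *\<^sub>C 0 = 0"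
proof -
  have "a *\<^sub>C 0 = a *\<^sub>C 0 + a *\<^sub>C 0" using scaleC_add_right[of a 0 0] by simp
  then show ?thesis by simp
qed

lemma scaleC_minus_left: "(- a) *\<^sub>C x = - (a *\<^sub>C x)"
proof -
  have "a *\<^sub>C x + (- a) *\<^sub>C x = 0" using scaleC_add_left[of a "-a" x] by simp
  then show ?thesis by (rule minus_unique[symmetric])
qed

lemma scaleC_minus_right: "a *\<^sub>C (- x) = - (a *\<^sub>C x)"
proof -
  have "a *\<^sub>C x + a *\<^sub>C (- x) = 0" using scaleC_add_right[of a x "-x"] by simp
  then show ?thesis by (rule minus_unique[symmetric])
qed

lemma scaleC_diff_left: "(a - b) *\<^sub>C x = a *\<^sub>C x - b *\<^sub>C x"
  using scaleC_add_left[of a "-b" x] by (simp add: scaleC_minus_left)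

lemma scaleC_diff_right: "a *\<^sub>C (x - y) = a *\<^sub>C x - a *\<^sub>C y"
  using scaleC_add_right[of a x "-y"] by (simp add: scaleC_minus_right)

lemma scaleC_sum_right: "a *\<^sub>C (\<Sum>i\<in>F. f i) = (\<Sum>i\<in>F. a *\<^sub>C f i)"
  by (induction F rule: infinite_finite_induct) (auto simp: scaleC_add_right)

lemma scaleC_of_real: "complex_of_real r *\<^sub>C x = r *\<^sub>R x"
  by (simp add: scaleR_scaleC)

lemma cinner_zero_left [simp]: "cinner 0 y = 0"
  using cinner_add_left[of 0 0 y] by simp

lemma cinner_zero_right [simp]: "cinner x 0 = 0"
  using cinner_commute[of x 0] by simp

lemma cinner_add_right: "cinner x (y + z) = cinner x y + cinner x z"
  by (metis cinner_add_left cinner_commute complex_cnj_add)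

lemma cinner_scaleC_right: "cinner x (c *\<^sub>C y) = cnj c * cinner x y"
  by (metis cinner_scaleC_left cinner_commute complex_cnj_mult)

lemma cinner_minus_left: "cinner (- x) y = - cinner x y"
proof -
  have "cinner x y + cinner (- x) y = 0" using cinner_add_left[of x "-x" y] by simp
  then show ?thesis by (metis add_eq_0_iff2 add.commute)
qed

lemma cinner_minus_right: "cinner x (- y) = - cinner x y"
  by (metis cinner_commute cinner_minus_left complex_cnj_minus)

lemma cinner_diff_left: "cinner (x - y) z = cinner x z - cinner y z"
  using cinner_add_left[of x "-y" z] by (simp add: cinner_minus_left)

lemma cinner_diff_right: "cinner x (y - z) = cinner x y - cinner x z"
  using cinner_add_right[of x y "-z"] by (simp add: cinner_minus_right)

lemma cinner_sum_left: "cinner (\<Sum>i\<in>F. f i) z = (\<Sum>i\<in>F. cinner (f i) z)"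
  by (induction F rule: infinite_finite_induct) (auto simp: cinner_add_left)

lemma cinner_sum_right: "cinner z (\<Sum>i\<in>F. f i) = (\<Sum>i\<in>F. cinner z (f i))"
  by (induction F rule: infinite_finite_induct) (auto simp: cinner_add_right)

lemma cinner_scaleR_left: "cinner (r *\<^sub>R x) y = complex_of_real r * cinner x y"
  by (simp add: scaleR_scaleC cinner_scaleC_left)

lemma cinner_scaleR_right: "cinner x (r *\<^sub>R y) = complex_of_real r * cinner x y"
  by (simp add: scaleR_scaleC cinner_scaleC_right)

lemma cinner_self_real: "Im (cinner x x) = 0"
  by (metis cinner_commute complex_cnj_cancel_iff complex_eq_iff complex_cnj_zero_iff
       cnj.sel(2) neg_equal_zero)

lemma cinner_self: "cinner x x = complex_of_real ((norm x)\<^sup>2)"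
proof -
  have "Re (cinner x x) \<ge> 0"
  proof (rule ccontr)
    assume "\<not> ?thesis"
    then have "sqrt (Re (cinner x x)) < 0" by simp
    then show False using norm_eq_sqrt_cinner[of x] by (metis norm_ge_zero not_less)
  qed
  then have "(norm x)\<^sup>2 = Re (cinner x x)" using norm_eq_sqrt_cinner[of x] by simp
  then show ?thesis using cinner_self_real[of x] by (simp add: complex_eq_iff)
qed

lemma norm_sq_cinner: "(norm x)\<^sup>2 = Re (cinner x x)"
  by (simp add: cinner_self)

lemma norm_scaleC: "norm (c *\<^sub>C x) = cmod c * norm x"
proof -
  have "cinner (c *\<^sub>C x) (c *\<^sub>C x) = (c * cnj c) * cinner x x"
    by (simp add: cinner_scaleC_left cinner_scaleC_right mult.assoc)
  then have "(norm (c *\<^sub>C x))\<^sup>2 = Re ((c * cnj c) * cinner x x)"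
    by (simp only: norm_sq_cinner)
  also have "\<dots> = Re (complex_of_real ((cmod c)\<^sup>2) * complex_of_real ((norm x)\<^sup>2))"
    by (simp only: complex_norm_square[symmetric] cinner_self)
  also have "\<dots> = (cmod c * norm x)\<^sup>2"
    by (simp only: Re_complex_of_real flip: of_real_mult) (simp add: power_mult_distrib)
  finally show ?thesis by (simp add: power2_eq_iff_nonneg)
qed

lemma Cauchy_Schwarz: "cmod (cinner x y) \<le> norm x * norm y"
proof (cases "y = 0")
  case True then show ?thesis by simp
next
  case False
  define c where "c = cinner x y"
  define N where "N = complex_of_real ((norm y)\<^sup>2)"
  define t where "t = c / N"
  have yy: "cinner y y = N" by (simp add: cinner_self N_def)
  have yx: "cinner y x = cnj c" by (simp add: c_def cinner_commute[of y x])
  have ny: "norm y > 0" using False by simp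
  have N0: "N \<noteq> 0" using ny by (simp add: N_def)
  have cN: "cnj N = N" by (simp add: N_def)
  have ct: "cnj t = cnj c / N" by (simp add: t_def cN)
  have "0 \<le> (norm (x - t *\<^sub>C y))\<^sup>2" by simp
  also have "(norm (x - t *\<^sub>C y))\<^sup>2 = Re (cinner x x - cnj t * cinner x y - t * cinner y x + t * cnj t * cinner y y)"
    by (simp add: norm_sq_cinner cinner_diff_left cinner_diff_right cinner_scaleC_left cinner_scaleC_right algebra_simps)
  also have "cinner x x - cnj t * cinner x y - t * cinner y x + t * cnj t * cinner y y = cinner x x - c * cnj c / N"
    unfolding yy yx ct using N0 by (simp add: t_def c_def[symmetric] field_simps)
  also have "c * cnj c / N = of_real ((cmod c)\<^sup>2 / (norm y)\<^sup>2)"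
    by (simp only: complex_norm_square[symmetric] N_def of_real_divide)
  finally have "(cmod c)\<^sup>2 / (norm y)\<^sup>2 \<le> (norm x)\<^sup>2"
    by (simp add: cinner_self)
  then have "(cmod c)\<^sup>2 \<le> (norm x * norm y)\<^sup>2"
    using ny by (simp add: field_simps power_mult_distrib)
  then show ?thesis unfolding c_def by (simp add: power2_le_iff_abs_le)
qed

lemma bounded_bilinear_cinner: "bounded_bilinear cinner"
proof -
  have "\<exists>K. \<forall>a b. cmod (cinner a b) \<le> norm a * norm b * K"
    by (rule exI[of _ 1]) (simp add: Cauchy_Schwarz)
  then show ?thesis by (intro bounded_bilinear.intro) (auto simp: cinner_add_left cinner_add_right cinner_scaleR_left cinner_scaleR_right scaleR_conv_of_real)
qed

lemma bounded_bilinear_scaleC: "bounded_bilinear (\<lambda>c x. c *\<^sub>C x)"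
proof -
  have "\<exists>K. \<forall>a b. norm (a *\<^sub>C b) \<le> norm a * norm b * K"
    by (rule exI[of _ 1]) (simp add: norm_scaleC)
  then show ?thesis by (intro bounded_bilinear.intro) (auto simp: scaleC_add_left scaleC_add_right scaleR_scaleC scaleC_scaleC scaleR_conv_of_real mult.commute)
qed

lemma bl_cinner_left: "bounded_linear (\<lambda>x. cinner x y)"
  by (rule bounded_bilinear.bounded_linear_left[OF bounded_bilinear_cinner])

lemma bl_cinner_right: "bounded_linear (\<lambda>y. cinner x y)"
  by (rule bounded_bilinear.bounded_linear_right[OF bounded_bilinear_cinner])

lemma cinner_eq_zero_iff': "cinner x x = 0 \<longleftrightarrow> x = 0"
  by (rule cinner_eq_zero_iff)



definition ON :: "'a::chilbert_space set \<Rightarrow> bool" where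
  "ON B \<longleftrightarrow> (\<forall>e\<in>B. \<forall>e'\<in>B. cinner e e' = (if e = e' then 1 else 0))"

lemma ON_basis: "orthonormal_basis B \<Longrightarrow> ON B"
  by (simp add: orthonormal_basis_def ON_def)

lemma fin_cinner:
  assumes "ON B" "finite F" "F \<subseteq> B" "e' \<in> B"
  shows "cinner (\<Sum>e\<in>F. c e *\<^sub>C e) e' = (if e' \<in> F then c e' else 0)"
proof -
  have "cinner (\<Sum>e\<in>F. c e *\<^sub>C e) e' = (\<Sum>e\<in>F. c e * cinner e e')"
    by (simp add: cinner_sum_left cinner_scaleC_left)
  also have "\<dots> = (\<Sum>e\<in>F. if e = e' then c e else 0)"
    using assms by (intro sum.cong) (auto simp: ON_def)
  also have "\<dots> = (if e' \<in> F then c e' else 0)"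
    using assms(2) by simp
  finally show ?thesis .
qed

lemma fin_norm:
  assumes "ON B" "finite F" "F \<subseteq> B"
  shows "(norm (\<Sum>e\<in>F. c e *\<^sub>C e))\<^sup>2 = (\<Sum>e\<in>F. (cmod (c e))\<^sup>2)"
proof -
  let ?v = "\<Sum>e\<in>F. c e *\<^sub>C e"
  have "cinner ?v ?v = (\<Sum>e\<in>F. cnj (c e) * cinner ?v e)"
    by (simp add: cinner_sum_right cinner_scaleC_right)
  also have "\<dots> = (\<Sum>e\<in>F. cnj (c e) * c e)"
    by (intro sum.cong refl) (simp add: fin_cinner[OF assms] subsetD[OF assms(3)])
  also have "\<dots> = (\<Sum>e\<in>F. complex_of_real ((cmod (c e))\<^sup>2))"
    by (intro sum.cong refl) (subst complex_norm_square, rule mult.commute)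
  finally show ?thesis by (simp add: norm_sq_cinner)
qed

lemma Bessel:
  assumes "ON B" "finite F" "F \<subseteq> B"
  shows "(\<Sum>e\<in>F. (cmod (cinner z e))\<^sup>2) \<le> (norm z)\<^sup>2"
proof -
  define v where "v = (\<Sum>e\<in>F. cinner z e *\<^sub>C e)"
  have "cinner z v = (\<Sum>e\<in>F. cnj (cinner z e) * cinner z e)"
    by (simp add: v_def cinner_sum_right cinner_scaleC_right)
  also have "\<dots> = (\<Sum>e\<in>F. cnj (cinner z e) * cinner v e)"
    unfolding v_def by (intro sum.cong refl) (simp add: fin_cinner[OF assms] subsetD[OF assms(3)])
  also have "\<dots> = cinner v v"
    by (simp add: v_def cinner_sum_right cinner_scaleC_right)
  finally have zv: "cinner (z - v) v = 0" by (simp add: cinner_diff_left)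
  then have vz: "cinner v (z - v) = 0" by (metis cinner_commute complex_cnj_zero)
  have "(norm z)\<^sup>2 = Re (cinner ((z - v) + v) ((z - v) + v))" by (simp add: norm_sq_cinner)
  also have "\<dots> = (norm (z - v))\<^sup>2 + (norm v)\<^sup>2"
    by (simp only: cinner_add_left cinner_add_right zv vz norm_sq_cinner) simp
  finally have "(norm v)\<^sup>2 \<le> (norm z)\<^sup>2" by simp
  then show ?thesis using fin_norm[OF assms, of "\<lambda>e. cinner z e"] by (simp add: v_def)
qed

lemma ON_summable:
  fixes c :: "'a::chilbert_space \<Rightarrow> complex"
  assumes ON: "ON B"
    and bd: "\<And>F. finite F \<Longrightarrow> F \<subseteq> B \<Longrightarrow> (\<Sum>e\<in>F. (cmod (c e))\<^sup>2) \<le> K"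
  shows "(\<lambda>e. c e *\<^sub>C e) summable_on B"
proof -
  define f where "f = (\<lambda>e. c e *\<^sub>C e)"
  let ?g = "\<lambda>e. (cmod (c e))\<^sup>2"
  have "?g summable_on B"
    by (rule nonneg_bdd_above_summable_on) (use bd in \<open>auto simp: bdd_above_def\<close>)
  then obtain L where lim: "(sum ?g \<longlongrightarrow> L) (finite_subsets_at_top B)"
    unfolding summable_on_def has_sum_def by blast
  have "\<exists>P. eventually P (finite_subsets_at_top B) \<and>
              (\<forall>F F'. P F \<and> P F' \<longrightarrow> dist (sum f F) (sum f F') < e)" if "e>0" for e
  proof -
    define d P where "d = e^2/32" and "P F \<longleftrightarrow> finite F \<and> F \<subseteq> B \<and> dist (sum ?g F) L < d" for F
    have "d > 0" using that by (simp add: d_def)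
    have ev_P: "eventually P (finite_subsets_at_top B)"
      using lim
      by (auto simp add: P_def[abs_def] \<open>0 < d\<close> eventually_conj_iff eventually_finite_subsets_at_top_weakI tendsto_iff)
    moreover have "dist (sum f F1) (sum f F2) < e" if "P F1" and "P F2" for F1 F2
    proof -
      from ev_P
      obtain F' where "finite F'" and "F' \<subseteq> B" and P_sup_F': "finite F \<and> F \<supseteq> F' \<and> F \<subseteq> B \<Longrightarrow> P F" for F
        by atomize_elim (simp add: eventually_finite_subsets_at_top)
      define F where "F = F' \<union> F1 \<union> F2"
      have "finite F" and "F \<subseteq> B"
        using F_def P_def[abs_def] that \<open>finite F'\<close> \<open>F' \<subseteq> B\<close> by auto
      have dist_F: "dist (sum ?g F) L < d"
        by (metis F_def \<open>F \<subseteq> B\<close> P_def P_sup_F' \<open>finite F\<close> le_supE order_refl)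
      have dist_F_subset: "dist (sum f F) (sum f G) < e/4" if G: "G \<subseteq> F" "P G" for G
      proof -
        have "dist (sum f F) (sum f G) = norm (sum f (F-G))"
          unfolding dist_norm using \<open>finite F\<close> G by (subst sum_diff) auto
        moreover have "(norm (sum f (F-G)))\<^sup>2 = sum ?g (F - G)"
          unfolding f_def by (rule fin_norm[OF ON]) (use \<open>finite F\<close> \<open>F \<subseteq> B\<close> in auto)
        moreover have "sum ?g (F - G) = sum ?g F - sum ?g G"
          using \<open>finite F\<close> G by (subst sum_diff) auto
        moreover have "sum ?g F - sum ?g G < 2 * d"
        proof -
          have "\<bar>sum ?g F - L\<bar> < d" using dist_F by (simp add: dist_real_def)
          moreover have "\<bar>sum ?g G - L\<bar> < d" using G(2) by (simp add: P_def dist_real_def)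
          ultimately show ?thesis by linarith
        qed
        moreover have "2 * d = (e/4)\<^sup>2" by (simp add: d_def power2_eq_square)
        ultimately have "(dist (sum f F) (sum f G))\<^sup>2 < (e/4)\<^sup>2" by simp
        then show ?thesis using \<open>e > 0\<close> by (metis power2_less_imp_less less_eq_real_def divide_pos_pos zero_less_numeral)
      qed
      have "dist (sum f F1) (sum f F2) \<le> dist (sum f F) (sum f F1) + dist (sum f F) (sum f F2)"
        by (rule dist_triangle3)
      also have "\<dots> < e/4 + e/4"
        by (intro add_strict_mono dist_F_subset that) (auto simp: F_def)
      also have "\<dots> \<le> e" using \<open>e > 0\<close> by simp
      finally show ?thesis .
    qed
    ultimately show ?thesis by blast
  qed
  then have "cauchy_filter (filtermap (sum f) (finite_subsets_at_top B))"
    by (simp add: cauchy_filter_metric_filtermap)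
  moreover have "complete (UNIV::'a set)"
    by (meson Cauchy_convergent UNIV_I complete_def convergent_def)
  ultimately obtain L' where "(sum f \<longlongrightarrow> L') (finite_subsets_at_top B)"
    using complete_uniform[where S=UNIV] by (force simp add: filterlim_def)
  then show ?thesis
    using summable_on_def has_sum_def f_def by blast
qed

lemma has_sum_coef:
  assumes "ON B" "((\<lambda>e. c e *\<^sub>C e) has_sum S) B" "e' \<in> B"
  shows "cinner S e' = c e'"
proof -
  have "((\<lambda>e. cinner (c e *\<^sub>C e) e') has_sum cinner S e') B"
    by (rule has_sum_bounded_linear[OF bl_cinner_left assms(2)])
  moreover have "((\<lambda>e. cinner (c e *\<^sub>C e) e') has_sum c e') B"
  proof -
    have "((\<lambda>e. cinner (c e *\<^sub>C e) e') has_sum c e') B \<longleftrightarrow> ((\<lambda>e. c e) has_sum c e') {e'}"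
      by (rule has_sum_cong_neutral) (use assms in \<open>auto simp: ON_def cinner_scaleC_left\<close>)
    moreover have "((\<lambda>e. c e) has_sum c e') {e'}" using has_sum_finite[of "{e'}" c] by simp
    ultimately show ?thesis by simp
  qed
  ultimately show ?thesis using has_sum_unique by blast
qed



lemma basis_ext:
  assumes "orthonormal_basis B" "\<And>e. e \<in> B \<Longrightarrow> cinner u e = cinner v e"
  shows "u = v"
proof -
  have "\<forall>e\<in>B. cinner (u - v) e = 0" using assms(2) by (simp add: cinner_diff_left)
  then have "u - v = 0" using assms(1) unfolding orthonormal_basis_def by blast
  then show ?thesis by simp
qed

lemma expansion:
  assumes "orthonormal_basis B"
  shows "((\<lambda>e. cinner z e *\<^sub>C e) has_sum z) B"
proof -
  have ON: "ON B" using assms by (rule ON_basis)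
  have "(\<lambda>e. cinner z e *\<^sub>C e) summable_on B"
    by (rule ON_summable[OF ON, of _ "(norm z)\<^sup>2"]) (rule Bessel[OF ON])
  then have hs: "((\<lambda>e. cinner z e *\<^sub>C e) has_sum infsum (\<lambda>e. cinner z e *\<^sub>C e) B) B"
    by (simp add: summable_iff_has_sum_infsum)
  have "infsum (\<lambda>e. cinner z e *\<^sub>C e) B = z"
    by (rule basis_ext[OF assms]) (rule has_sum_coef[OF ON hs])
  then show ?thesis using hs by simp
qed

lemma cconj_has_sum:
  assumes "orthonormal_basis B"
  shows "((\<lambda>e. cnj (cinner z e) *\<^sub>C e) has_sum cconj B z) B"
proof -
  have ON: "ON B" using assms by (rule ON_basis)
  have "(\<lambda>e. cnj (cinner z e) *\<^sub>C e) summable_on B"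
    by (rule ON_summable[OF ON, of _ "(norm z)\<^sup>2"]) (simp add: Bessel[OF ON])
  then show ?thesis unfolding cconj_def by (simp add: summable_iff_has_sum_infsum)
qed

lemma cconj_coef:
  assumes "orthonormal_basis B" "e \<in> B"
  shows "cinner (cconj B z) e = cnj (cinner z e)"
  using has_sum_coef[OF ON_basis[OF assms(1)] cconj_has_sum[OF assms(1)] assms(2)] .

lemma cconj_cconj:
  assumes "orthonormal_basis B"
  shows "cconj B (cconj B z) = z"
  by (rule basis_ext[OF assms]) (simp add: cconj_coef[OF assms])

lemma cinner_cconj:
  assumes "orthonormal_basis B"
  shows "cinner (cconj B a) (cconj B b) = cinner b a"
proof -
  have h1: "((\<lambda>e. cinner (cconj B a) (cnj (cinner b e) *\<^sub>C e)) has_sum cinner (cconj B a) (cconj B b)) B"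
    by (rule has_sum_bounded_linear[OF bl_cinner_right cconj_has_sum[OF assms]])
  have h2: "((\<lambda>e. cinner (cinner b e *\<^sub>C e) a) has_sum cinner b a) B"
    by (rule has_sum_bounded_linear[OF bl_cinner_left expansion[OF assms]])
  have "((\<lambda>e. cinner (cconj B a) (cnj (cinner b e) *\<^sub>C e)) has_sum cinner b a) B"
  proof -
    have "((\<lambda>e. cinner (cconj B a) (cnj (cinner b e) *\<^sub>C e)) has_sum cinner b a) B \<longleftrightarrow>
          ((\<lambda>e. cinner (cinner b e *\<^sub>C e) a) has_sum cinner b a) B"
      by (rule has_sum_cong) (simp add: cinner_scaleC_left cinner_scaleC_right cconj_coef[OF assms]
            cinner_commute[of _ a])
    then show ?thesis using h2 by simp
  qed
  then show ?thesis using h1 has_sum_unique by blast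
qed

lemma norm_cconj:
  assumes "orthonormal_basis B"
  shows "norm (cconj B z) = norm z"
proof -
  have "(norm (cconj B z))\<^sup>2 = (norm z)\<^sup>2" by (simp add: norm_sq_cinner cinner_cconj[OF assms])
  then show ?thesis by (simp add: power2_eq_iff_nonneg)
qed

lemma bl_sum:
  assumes "bounded_linear D"
  shows "D (\<Sum>i\<in>F. f i) = (\<Sum>i\<in>F. D (f i))"
  using linear_sum[OF bounded_linear.linear[OF assms]] by simp

lemma riesz:
  fixes D :: "'a::chilbert_space \<Rightarrow> complex" and B :: "'a set"
  assumes B: "orthonormal_basis B" and bl: "bounded_linear D" and hom: "\<And>c y. D (c *\<^sub>C y) = c * D y"
  shows "\<exists>u. \<forall>y. D y = cinner y u"
proof -
  have ON: "ON B" using B by (rule ON_basis)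
  obtain K where K: "K > 0" "\<And>x. norm (D x) \<le> norm x * K"
    using bounded_linear.pos_bounded[OF bl] by blast
  have bd: "(\<Sum>e\<in>F. (cmod (cnj (D e)))\<^sup>2) \<le> K\<^sup>2" if F: "finite F" "F \<subseteq> B" for F :: "'a set"
  proof -
    define S where "S = (\<Sum>e\<in>F. (cmod (D e))\<^sup>2)"
    define v where "v = (\<Sum>e\<in>F. cnj (D e) *\<^sub>C e)"
    have "D v = (\<Sum>e\<in>F. cnj (D e) * D e)" by (simp add: v_def bl_sum[OF bl] hom)
    also have "\<dots> = of_real S"
      unfolding S_def of_real_sum by (intro sum.cong refl) (subst complex_norm_square, rule mult.commute)
    finally have Dv: "D v = of_real S" .
    have S0: "S \<ge> 0" by (simp add: S_def sum_nonneg)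
    have nv: "(norm v)\<^sup>2 = S" using fin_norm[OF ON F, of "\<lambda>e. cnj (D e)"] by (simp add: v_def S_def)
    have "S \<le> norm v * K" using K(2)[of v] Dv S0 by simp
    then have "S\<^sup>2 \<le> (norm v)\<^sup>2 * K\<^sup>2" using S0
      by (metis power_mono power_mult_distrib)
    then have "S * S \<le> S * K\<^sup>2" using nv by (simp add: power2_eq_square)
    then have "S \<le> K\<^sup>2" using S0
      by (cases "S = 0") (simp, simp add: mult_le_cancel_left_pos)
    then show ?thesis by (simp add: S_def)
  qed
  have "(\<lambda>e. cnj (D e) *\<^sub>C e) summable_on B"
    by (rule ON_summable[OF ON bd])
  then obtain u where hu: "((\<lambda>e. cnj (D e) *\<^sub>C e) has_sum u) B"
    unfolding summable_on_def by blast
  have "D y = cinner y u" for y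
  proof -
    have h1: "((\<lambda>e. D (cinner y e *\<^sub>C e)) has_sum D y) B"
      by (rule has_sum_bounded_linear[OF bl expansion[OF B]])
    have h2: "((\<lambda>e. cinner y (cnj (D e) *\<^sub>C e)) has_sum cinner y u) B"
      by (rule has_sum_bounded_linear[OF bl_cinner_right hu])
    have "((\<lambda>e. D (cinner y e *\<^sub>C e)) has_sum cinner y u) B"
      using h2 by (simp add: hom cinner_scaleC_right mult.commute)
    then show ?thesis using h1 has_sum_unique by blast
  qed
  then show ?thesis by blast
qed

lemma hol_grad_char:
  assumes B: "orthonormal_basis B" and d: "(g has_derivative D) (at x)" and u: "\<And>y. D y = cinner y u"
  shows "hol_grad B g x = cconj B u"
proof -
  have fd: "frechet_derivative g (at x) = D" using frechet_derivative_at[OF d] by simp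
  show ?thesis unfolding hol_grad_def fd
  proof (rule the_equality)
    show "\<forall>y. D y = cinner y (cconj B (cconj B u))" by (simp add: cconj_cconj[OF B] u)
  next
    fix v assume v: "\<forall>y. D y = cinner y (cconj B v)"
    have "cinner (u - cconj B v) (u - cconj B v) = 0"
      using v u by (simp add: cinner_diff_right)
    then have "u = cconj B v" by (simp add: cinner_eq_zero_iff)
    then show "v = cconj B u" by (simp add: cconj_cconj[OF B])
  qed
qed



lemma cinner_self_cnj: "cnj (cinner a a) = cinner a a"
  by (simp add: cinner_self)

lemma cinner_cproj_left: "cinner (cproj a y) z = cinner y a * cinner a z / cinner a a"
  by (simp add: cproj_def cinner_scaleC_left)

lemma cproj_selfadj: "cinner (cproj a y) z = cinner y (cproj a z)"
  by (simp add: cproj_def cinner_scaleC_left cinner_scaleC_right cinner_self_cnj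
      cinner_commute[of z a])

lemma cinner_cproj_a: "cinner (cproj a y) a = cinner y a"
  by (cases "a = 0") (simp_all add: cinner_cproj_left cinner_eq_zero_iff)

lemma cproj_idem: "cproj a (cproj a y) = cproj a y"
  by (simp add: cproj_def cinner_scaleC_left cinner_cproj_a[unfolded cproj_def])

lemma cproj_zero [simp]: "cproj a 0 = 0"
  by (simp add: cproj_def)

lemma cproj_add: "cproj a (y + z) = cproj a y + cproj a z"
  by (simp add: cproj_def cinner_add_left add_divide_distrib scaleC_add_left)

lemma cproj_diff: "cproj a (y - z) = cproj a y - cproj a z"
  by (simp add: cproj_def cinner_diff_left diff_divide_distrib scaleC_diff_left)

lemma cproj_scaleC: "cproj a (c *\<^sub>C y) = c *\<^sub>C cproj a y"
  by (simp add: cproj_def cinner_scaleC_left scaleC_scaleC)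

lemma cproj_Q: "cproj a (y - cproj a y) = 0"
  by (simp add: cproj_diff cproj_idem)

lemma cproj_orth: "cinner (cproj a y) (z - cproj a z) = 0"
  by (simp add: cproj_selfadj cproj_Q)

lemma cproj_orth': "cinner (y - cproj a y) (cproj a z) = 0"
  by (simp add: cproj_selfadj[symmetric] cproj_Q)

lemma cproj_mul: "cinner y a *\<^sub>C a = complex_of_real ((norm a)\<^sup>2) *\<^sub>C cproj a y"
proof (cases "a = 0")
  case True then show ?thesis by (simp add: cproj_def)
next
  case False
  have aa: "cinner a a = complex_of_real ((norm a)\<^sup>2)" by (rule cinner_self)
  show ?thesis using False by (simp add: cproj_def scaleC_scaleC aa)
qed

lemma bl_cproj: "bounded_linear (cproj a)"
proof -
  have "bounded_linear (\<lambda>y. (cinner y a / cinner a a) *\<^sub>C a)"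
    by (rule bounded_linear_compose[OF bounded_bilinear.bounded_linear_left[OF bounded_bilinear_scaleC]])
       (rule bounded_linear_compose[OF bounded_linear_divide bl_cinner_left])
  then show ?thesis by (simp add: cproj_def[abs_def])
qed

lemma norm_cproj_sq: "(norm a)\<^sup>2 * (norm (cproj a w))\<^sup>2 = (cmod (cinner w a))\<^sup>2"
proof (cases "a = 0")
  case True then show ?thesis by (simp add: cproj_def)
next
  case False
  have "norm (cproj a w) = cmod (cinner w a) / (norm a)\<^sup>2 * norm a"
    by (simp add: cproj_def norm_scaleC norm_divide cinner_self norm_power)
  then show ?thesis using False by (simp add: field_simps power2_eq_square)
qed

definition Tm :: "'a::chilbert_space \<Rightarrow> 'a \<Rightarrow> 'a" where
  "Tm a z = complex_of_real (sqrt (1 - (norm a)\<^sup>2)) *\<^sub>C (z - cproj a z) + cproj a z"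

lemma bl_Tm: "bounded_linear (Tm a)"
proof -
  have "bounded_linear (\<lambda>z. complex_of_real (sqrt (1 - (norm a)\<^sup>2)) *\<^sub>C (z - cproj a z) + cproj a z)"
    by (intro bounded_linear_add bl_cproj
          bounded_linear_compose[OF bounded_bilinear.bounded_linear_right[OF bounded_bilinear_scaleC]]
          bounded_linear_sub bounded_linear_ident)
  then show ?thesis by (simp add: Tm_def[abs_def])
qed

lemma moebius_Tm: "moebius a = (\<lambda>y. Tm a ((1 / (1 - cinner y a)) *\<^sub>C (a - y)))"
  by (simp add: moebius_def Tm_def Let_def fun_eq_iff)

lemma moebius_0: "moebius a 0 = a"
proof (cases "a = 0")
  case True then show ?thesis by (simp add: moebius_def cproj_def)
next
  case False
  then have "cinner a a \<noteq> 0" by (simp add: cinner_eq_zero_iff)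
  then have "cproj a a = a" by (simp add: cproj_def scaleC_one)
  then show ?thesis by (simp add: moebius_def scaleC_one Let_def)
qed

lemma moebius_deriv:
  "(moebius a has_derivative (\<lambda>v. Tm a (cinner v a *\<^sub>C a - v))) (at 0)"
proof -
  have q: "((\<lambda>y. inverse (1 - cinner y a)) has_derivative
          (\<lambda>h. - (inverse (1 - cinner 0 a) * (0 - cinner h a) * inverse (1 - cinner 0 a)))) (at 0)"
    by (intro Deriv.has_derivative_inverse has_derivative_diff has_derivative_const
          bounded_linear.has_derivative[OF bl_cinner_left] has_derivative_ident) simp
  have h: "((\<lambda>y. inverse (1 - cinner y a) *\<^sub>C (a - y)) has_derivative
          (\<lambda>h. inverse (1 - cinner 0 a) *\<^sub>C (0 - h) +
               (- (inverse (1 - cinner 0 a) * (0 - cinner h a) * inverse (1 - cinner 0 a))) *\<^sub>C (a - 0))) (at 0)"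
    by (rule bounded_bilinear.FDERIV[OF bounded_bilinear_scaleC q]) (intro has_derivative_diff has_derivative_const has_derivative_ident)
  have "((\<lambda>y. Tm a (inverse (1 - cinner y a) *\<^sub>C (a - y))) has_derivative
          (\<lambda>h. Tm a (inverse (1 - cinner 0 a) *\<^sub>C (0 - h) +
               (- (inverse (1 - cinner 0 a) * (0 - cinner h a) * inverse (1 - cinner 0 a))) *\<^sub>C (a - 0)))) (at 0)"
    by (rule bounded_linear.has_derivative[OF bl_Tm h])
  moreover have eqf: "moebius a = (\<lambda>y. Tm a (inverse (1 - cinner y a) *\<^sub>C (a - y)))"
    by (simp add: moebius_Tm divide_inverse)
  moreover have "(\<lambda>h. Tm a (inverse (1 - cinner 0 a) *\<^sub>C (0 - h) +
               (- (inverse (1 - cinner 0 a) * (0 - cinner h a) * inverse (1 - cinner 0 a))) *\<^sub>C (a - 0)))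
        = (\<lambda>v. Tm a (cinner v a *\<^sub>C a - v))"
    by (simp add: fun_eq_iff scaleC_one scaleC_minus_right)
  ultimately show ?thesis using has_derivative_eq_rhs by metis
qed



lemma cproj_self: "cproj a a = a"
proof (cases "a = 0")
  case True then show ?thesis by (simp add: cproj_def)
next
  case False
  then have "cinner a a \<noteq> 0" by (simp add: cinner_eq_zero_iff)
  then show ?thesis by (simp add: cproj_def scaleC_one)
qed

lemma Tm_selfadj: "cinner (Tm a z) u = cinner z (Tm a u)"
  by (simp add: Tm_def cinner_add_left cinner_add_right cinner_scaleC_left cinner_scaleC_right
      cinner_diff_left cinner_diff_right cproj_selfadj)

lemma R_selfadj: "cinner (cinner y a *\<^sub>C a - y) u = cinner y (cinner u a *\<^sub>C a - u)"
  by (simp add: cinner_diff_left cinner_diff_right cinner_scaleC_left cinner_scaleC_right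
      cinner_commute[of a u])

lemma decomp_inner: "cinner w u = cinner (cproj a w) (cproj a u) + cinner (w - cproj a w) (u - cproj a u)"
proof -
  have "cinner w u = cinner (cproj a w + (w - cproj a w)) (cproj a u + (u - cproj a u))" by simp
  also have "\<dots> = cinner (cproj a w) (cproj a u) + cinner (w - cproj a w) (u - cproj a u)"
    by (simp only: cinner_add_left cinner_add_right cproj_orth cproj_orth') simp
  finally show ?thesis .
qed

lemma decomp_norm:
  "(norm (\<alpha> *\<^sub>C cproj a y + \<beta> *\<^sub>C (z - cproj a z)))\<^sup>2 =
     (cmod \<alpha>)\<^sup>2 * (norm (cproj a y))\<^sup>2 + (cmod \<beta>)\<^sup>2 * (norm (z - cproj a z))\<^sup>2"
proof -
  have "(norm (\<alpha> *\<^sub>C cproj a y + \<beta> *\<^sub>C (z - cproj a z)))\<^sup>2 =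
      Re (cinner (\<alpha> *\<^sub>C cproj a y) (\<alpha> *\<^sub>C cproj a y) + cinner (\<beta> *\<^sub>C (z - cproj a z)) (\<beta> *\<^sub>C (z - cproj a z)))"
    by (simp add: norm_sq_cinner cinner_add_left cinner_add_right cinner_scaleC_left cinner_scaleC_right
        cproj_orth cproj_orth')
  also have "\<dots> = (norm (\<alpha> *\<^sub>C cproj a y))\<^sup>2 + (norm (\<beta> *\<^sub>C (z - cproj a z)))\<^sup>2"
    by (simp add: norm_sq_cinner)
  finally show ?thesis by (simp add: norm_scaleC power_mult_distrib)
qed

lemma norm_decomp: "(norm w)\<^sup>2 = (norm (cproj a w))\<^sup>2 + (norm (w - cproj a w))\<^sup>2"
  using decomp_norm[of 1 a w 1 w] by (simp add: scaleC_one)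

lemma L_formula:
  "Tm a (cinner u a *\<^sub>C a - u) =
     - (complex_of_real (1 - (norm a)\<^sup>2) *\<^sub>C cproj a u + complex_of_real (sqrt (1 - (norm a)\<^sup>2)) *\<^sub>C (u - cproj a u))"
proof -
  define p where "p = cproj a u"
  define s where "s = complex_of_real (sqrt (1 - (norm a)\<^sup>2))"
  define c where "c = complex_of_real ((norm a)\<^sup>2)"
  have Pz: "cproj a (cinner u a *\<^sub>C a - u) = c *\<^sub>C p - p"
    by (simp add: cproj_diff cproj_scaleC cproj_self cproj_mul p_def c_def cproj_idem)
  have "Tm a (cinner u a *\<^sub>C a - u) = s *\<^sub>C (p - u) + (c *\<^sub>C p - p)"
    unfolding Tm_def Pz s_def[symmetric] by (simp add: cproj_mul c_def p_def)
  also have "\<dots> = - ((1 - c) *\<^sub>C p + s *\<^sub>C (u - p))"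
    by (simp add: scaleC_diff_left scaleC_diff_right scaleC_one algebra_simps)
  finally show ?thesis by (simp add: p_def s_def c_def)
qed



lemma L_formula2:
  "cinner (Tm a u) a *\<^sub>C a - Tm a u =
     - (complex_of_real (1 - (norm a)\<^sup>2) *\<^sub>C cproj a u + complex_of_real (sqrt (1 - (norm a)\<^sup>2)) *\<^sub>C (u - cproj a u))"
proof -
  define p where "p = cproj a u"
  define s where "s = complex_of_real (sqrt (1 - (norm a)\<^sup>2))"
  define c where "c = complex_of_real ((norm a)\<^sup>2)"
  have PT: "cproj a (Tm a u) = p"
    by (simp add: Tm_def cproj_add cproj_scaleC cproj_Q cproj_idem p_def)
  have "cinner (Tm a u) a = cinner u a"
    by (metis PT cinner_cproj_a p_def)
  then have "cinner (Tm a u) a *\<^sub>C a = c *\<^sub>C p" by (simp add: cproj_mul c_def p_def)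
  moreover have "Tm a u = s *\<^sub>C (u - p) + p" by (simp add: Tm_def s_def p_def)
  ultimately have "cinner (Tm a u) a *\<^sub>C a - Tm a u = c *\<^sub>C p - (s *\<^sub>C (u - p) + p)" by simp
  also have "\<dots> = - ((1 - c) *\<^sub>C p + s *\<^sub>C (u - p))"
    by (simp add: scaleC_diff_left scaleC_diff_right scaleC_one algebra_simps)
  finally show ?thesis by (simp add: p_def s_def c_def)
qed

theorem lemma2p1:
  fixes f :: "'a::chilbert_space \<Rightarrow> complex" and B :: "'a set" and x :: 'a
  assumes "orthonormal_basis B"
    and "\<exists>w::'a. w \<noteq> 0"
    and "analytic_on_ball f"
    and "norm x < 1"
  shows "norm (inv_grad B f x) =
    (SUP w\<in>{w::'a. w \<noteq> 0}.
       cmod (cinner (hol_grad B f x) (cconj B w)) * (1 - (norm x)\<^sup>2) /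
       sqrt ((1 - (norm x)\<^sup>2) * (norm w)\<^sup>2 + (cmod (cinner w x))\<^sup>2))"
proof -
  note B = assms(1)
  define s2 where "s2 = 1 - (norm x)\<^sup>2"
  have "(norm x)\<^sup>2 < 1" using assms(4) by (simp add: abs_square_less_1)
  then have s2pos: "s2 > 0" by (simp add: s2_def)
  define s where "s = sqrt s2"
  have spos: "s > 0" using s2pos by (simp add: s_def)
  have ss: "s\<^sup>2 = s2" using s2pos by (simp add: s_def)
  obtain D where dD: "(f has_derivative D) (at x)" and hom: "\<And>c y. D (c *\<^sub>C y) = c * D y"
    using assms(3) assms(4) unfolding analytic_on_ball_def by blast
  have bl: "bounded_linear D" using dD by (rule has_derivative_bounded_linear)
  obtain u where u: "\<And>y. D y = cinner y u" using riesz[OF B bl hom] by blast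
  have hg: "hol_grad B f x = cconj B u" by (rule hol_grad_char[OF B dD]) (simp add: u)
  define p where "p = cproj x u"
  define q where "q = u - cproj x u"
  define Lu where "Lu = - (complex_of_real s2 *\<^sub>C p + complex_of_real s *\<^sub>C q)"
  have dD': "(f has_derivative D) (at (moebius x 0))" using dD by (simp add: moebius_0)
  have dc: "((f \<circ> moebius x) has_derivative (D \<circ> (\<lambda>v. Tm x (cinner v x *\<^sub>C x - v)))) (at 0)"
    by (rule diff_chain_at[OF moebius_deriv dD'])
  have adj: "(D \<circ> (\<lambda>v. Tm x (cinner v x *\<^sub>C x - v))) y = cinner y Lu" for y
  proof -
    have "(D \<circ> (\<lambda>v. Tm x (cinner v x *\<^sub>C x - v))) y = cinner (Tm x (cinner y x *\<^sub>C x - y)) u"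
      by (simp add: u)
    also have "\<dots> = cinner y (cinner (Tm x u) x *\<^sub>C x - Tm x u)"
      by (simp add: Tm_selfadj R_selfadj)
    also have "\<dots> = cinner y Lu"
      by (simp add: L_formula2 Lu_def s2_def s_def p_def q_def)
    finally show ?thesis .
  qed
  have ig: "inv_grad B f x = cconj B Lu"
    unfolding inv_grad_def by (rule hol_grad_char[OF B dc adj])
  define N where "N = norm Lu"
  have lhs: "norm (inv_grad B f x) = N" by (simp add: ig norm_cconj[OF B] N_def)
  have N2: "N\<^sup>2 = s2\<^sup>2 * (norm p)\<^sup>2 + s2 * (norm q)\<^sup>2"
    unfolding N_def Lu_def norm_minus_cancel p_def q_def
    using decomp_norm[of "complex_of_real s2" x u "complex_of_real s" u] ss s2pos by simp
  have N0: "N \<ge> 0" by (simp add: N_def)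
  define t where "t = (\<lambda>w. cmod (cinner w u) * s2 / sqrt (s2 * (norm w)\<^sup>2 + (cmod (cinner w x))\<^sup>2))"
  have rhs: "(SUP w\<in>{w::'a. w \<noteq> 0}.
       cmod (cinner (hol_grad B f x) (cconj B w)) * (1 - (norm x)\<^sup>2) /
       sqrt ((1 - (norm x)\<^sup>2) * (norm w)\<^sup>2 + (cmod (cinner w x))\<^sup>2)) = (SUP w\<in>{w::'a. w \<noteq> 0}. t w)"
    by (simp add: hg cinner_cconj[OF B] t_def s2_def)
  have den: "s2 * (norm w)\<^sup>2 + (cmod (cinner w x))\<^sup>2 = (norm (cproj x w))\<^sup>2 + s2 * (norm (w - cproj x w))\<^sup>2" for w
  proof -
    have "(cmod (cinner w x))\<^sup>2 = (norm x)\<^sup>2 * (norm (cproj x w))\<^sup>2" by (simp add: norm_cproj_sq)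
    then show ?thesis using norm_decomp[of w x] by (simp add: s2_def algebra_simps)
  qed
  have le: "t w \<le> N" if "w \<noteq> 0" for w
  proof -
    define \<alpha> where "\<alpha> = norm (cproj x w)"
    define \<gamma> where "\<gamma> = norm (w - cproj x w)"
    define P1 where "P1 = norm p"
    define Q1 where "Q1 = norm q"
    have dpos: "s2 * (norm w)\<^sup>2 + (cmod (cinner w x))\<^sup>2 > 0"
      using s2pos that by (simp add: add_pos_nonneg)
    have d: "s2 * (norm w)\<^sup>2 + (cmod (cinner w x))\<^sup>2 = \<alpha>\<^sup>2 + s2 * \<gamma>\<^sup>2" by (simp add: den \<alpha>_def \<gamma>_def)
    have ci: "cmod (cinner w u) \<le> \<alpha> * P1 + \<gamma> * Q1"
    proof -
      have "cmod (cinner w u) \<le> cmod (cinner (cproj x w) p) + cmod (cinner (w - cproj x w) q)"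
        using decomp_inner[of w u x] norm_triangle_ineq by (simp add: p_def q_def)
      also have "\<dots> \<le> \<alpha> * P1 + \<gamma> * Q1"
        by (intro add_mono Cauchy_Schwarz[THEN order_trans]) (simp_all add: \<alpha>_def \<gamma>_def P1_def Q1_def)
      finally show ?thesis .
    qed
    have nn: "\<alpha> \<ge> 0" "\<gamma> \<ge> 0" "P1 \<ge> 0" "Q1 \<ge> 0" by (simp_all add: \<alpha>_def \<gamma>_def P1_def Q1_def)
    have key: "((\<alpha> * P1 + \<gamma> * Q1) * s2)\<^sup>2 \<le> N\<^sup>2 * (\<alpha>\<^sup>2 + s2 * \<gamma>\<^sup>2)"
    proof -
      have "N\<^sup>2 * (\<alpha>\<^sup>2 + s2 * \<gamma>\<^sup>2) - ((\<alpha> * P1 + \<gamma> * Q1) * s2)\<^sup>2 = s2 * (s2 * P1 * \<gamma> - Q1 * \<alpha>)\<^sup>2"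
        unfolding N2 P1_def[symmetric] Q1_def[symmetric] by (simp add: power2_eq_square algebra_simps)
      moreover have "s2 * (s2 * P1 * \<gamma> - Q1 * \<alpha>)\<^sup>2 \<ge> 0" using s2pos by simp
      ultimately show ?thesis by linarith
    qed
    have "cmod (cinner w u) * s2 \<le> (\<alpha> * P1 + \<gamma> * Q1) * s2"
      using ci s2pos by (simp add: mult_right_mono)
    also have "\<dots> \<le> sqrt (N\<^sup>2 * (\<alpha>\<^sup>2 + s2 * \<gamma>\<^sup>2))"
      by (rule real_le_rsqrt[OF key])
    also have "\<dots> = N * sqrt (s2 * (norm w)\<^sup>2 + (cmod (cinner w x))\<^sup>2)"
      using N0 by (simp add: real_sqrt_mult d)
    finally show ?thesis
      using dpos by (simp add: t_def pos_divide_le_eq)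
  qed
  obtain w0 where w0: "w0 \<noteq> 0" "t w0 = N"
  proof (cases "u = 0")
    case True
    obtain w :: 'a where "w \<noteq> 0" using assms(2) by blast
    moreover have "N = 0" using True by (simp add: N_def Lu_def p_def q_def)
    ultimately show ?thesis using that[of w] True by (simp add: t_def)
  next
    case False
    define c where "c = complex_of_real (1 / s2)"
    define w where "w = 1 *\<^sub>C cproj x u + c *\<^sub>C (u - cproj x u)"
    have Pw: "cproj x w = p" unfolding w_def p_def
      apply (subst cproj_add)
      apply (subst cproj_scaleC)+
      apply (simp add: cproj_Q cproj_idem scaleC_one)
      done
    have Qw: "w - cproj x w = c *\<^sub>C q" unfolding Pw by (simp add: w_def p_def q_def scaleC_one)
    define K where "K = (norm p)\<^sup>2 + (norm q)\<^sup>2 / s2"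
    have "(norm u)\<^sup>2 > 0" using False by simp
    then have "(norm p)\<^sup>2 + (norm q)\<^sup>2 > 0" using norm_decomp[of u x] by (simp add: p_def q_def)
    then have Kpos: "K > 0" using s2pos
      by (simp add: K_def) (smt (verit) divide_nonneg_pos divide_pos_pos zero_le_power2)
    have "cinner w u = cinner (cproj x w) (cproj x u) + cinner (w - cproj x w) (u - cproj x u)"
      by (rule decomp_inner)
    also have "w - cproj x w = c *\<^sub>C q" by (rule Qw)
    also have "cproj x w = p" by (rule Pw)
    also have "cproj x u = p" by (simp add: p_def)
    also have "u - p = q" by (simp add: q_def p_def)
    finally have wu0: "cinner w u = cinner p p + cinner (c *\<^sub>C q) q" .
    have wu: "cinner w u = complex_of_real K"
      unfolding wu0 by (simp add: cinner_self cinner_scaleC_left K_def c_def)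
    have "s2 * (norm w)\<^sup>2 + (cmod (cinner w x))\<^sup>2 = (norm p)\<^sup>2 + s2 * ((norm q) / s2)\<^sup>2"
      unfolding den Qw using s2pos by (simp add: Pw norm_scaleC c_def norm_divide)
    also have "\<dots> = K" using s2pos by (simp add: K_def power2_eq_square field_simps)
    finally have dw: "s2 * (norm w)\<^sup>2 + (cmod (cinner w x))\<^sup>2 = K" .
    have "t w = K * s2 / sqrt K" using Kpos by (simp add: t_def wu dw)
    also have "\<dots> = s2 * sqrt K" using Kpos
      by (metis (no_types, lifting) mult.commute real_div_sqrt less_eq_real_def times_divide_eq_right)
    also have "\<dots> = N"
    proof -
      have e1: "(s2 * sqrt K)\<^sup>2 = s2\<^sup>2 * K" using Kpos by (simp add: power_mult_distrib)
      have "N\<^sup>2 = (s2 * sqrt K)\<^sup>2" unfolding e1 N2 using s2pos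
        by (simp add: K_def power2_eq_square field_simps)
      then show ?thesis using N0 s2pos Kpos by (simp add: power2_eq_iff_nonneg)
    qed
    finally have "t w = N" .
    moreover have "w \<noteq> 0" using wu Kpos by auto
    ultimately show ?thesis using that by blast
  qed
  have "(SUP w\<in>{w::'a. w \<noteq> 0}. t w) = N"
    by (rule cSup_eq_maximum) (use w0 le in auto)
  then show ?thesis using lhs rhs by simp
qed


end
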